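(* A signed bigraph $\widehat{G}$ is not chordal if and only if it contains a non-trivial induced subgraph which has no signed simplicial edge.
   Context: A signed graph is a finite simple graph each of whose edges is assigned a sign, positive or negative. A signed bigraph is a signed graph whose underlying graph is bipartite. An induced subgraph is obtained by deleting vertices only; it is non-trivial if it has at least one edge. A signed graph is positive if all its edges are positive. In a bigraph with bipartition $(X,Y)$, a subgraph $H$ is a biclique if every vertex of $V(H)\cap X$ is adjacent to every vertex of $V(H)\cap Y$. For an edge $uv$, $N(uv)=(N(u)\cup N(v))\setminus\{u,v\}$; $uv$ is signed simplicial (in the signed bigraph under consideration) if $N(uv)$ induces a positive biclique. A signed bigraph $\widehat G$ is chordal if its edges can be ordered $e_1,\dots,e_m$ so that each $e_i$ is signed simplicial in $\widehat G-\{e_1,\dots,e_{i-1}\}$ (edges deleted, vertices kept). *)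

theory Defs
  imports Main
begin

text \<open>A signed bigraph is given by a vertex set V, a set E of edges (2-element
vertex sets), a sign function sg on edges (True = positive, False = negative),
and a bipartition (X, Y) of V such that every edge joins X and Y.\<close>

definition signed_bigraph :: "'a set \<Rightarrow> 'a set set \<Rightarrow> 'a set \<Rightarrow> 'a set \<Rightarrow> bool" where
  "signed_bigraph V E X Y \<longleftrightarrow> finite V \<and> X \<union> Y = V \<and> X \<inter> Y = {} \<and>
     (\<forall>e\<in>E. \<exists>x\<in>X. \<exists>y\<in>Y. e = {x, y})"

definition nbhd :: "'a set set \<Rightarrow> 'a \<Rightarrow> 'a set" where
  "nbhd E u = {w. {u, w} \<in> E}"

definition edge_nbhd :: "'a set set \<Rightarrow> 'a \<Rightarrow> 'a \<Rightarrow> 'a set" where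
  "edge_nbhd E u v = (nbhd E u \<union> nbhd E v) - {u, v}"

definition induced_edges :: "'a set set \<Rightarrow> 'a set \<Rightarrow> 'a set set" where
  "induced_edges E S = {e \<in> E. e \<subseteq> S}"

definition is_biclique :: "'a set set \<Rightarrow> 'a set \<Rightarrow> 'a set \<Rightarrow> 'a set \<Rightarrow> bool" where
  "is_biclique E X Y S \<longleftrightarrow> (\<forall>x\<in>S \<inter> X. \<forall>y\<in>S \<inter> Y. {x, y} \<in> E)"

definition is_positive :: "'a set set \<Rightarrow> ('a set \<Rightarrow> bool) \<Rightarrow> 'a set \<Rightarrow> bool" where
  "is_positive E sg S \<longleftrightarrow> (\<forall>e\<in>induced_edges E S. sg e)"

definition signed_simplicial ::
  "'a set set \<Rightarrow> ('a set \<Rightarrow> bool) \<Rightarrow> 'a set \<Rightarrow> 'a set \<Rightarrow> 'a set \<Rightarrow> bool" where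
  "signed_simplicial E sg X Y e \<longleftrightarrow> e \<in> E \<and>
     (\<exists>u v. e = {u, v} \<and> is_biclique E X Y (edge_nbhd E u v) \<and>
            is_positive E sg (edge_nbhd E u v))"

definition chordal_sb :: "'a set set \<Rightarrow> ('a set \<Rightarrow> bool) \<Rightarrow> 'a set \<Rightarrow> 'a set \<Rightarrow> bool" where
  "chordal_sb E sg X Y \<longleftrightarrow> (\<exists>es. distinct es \<and> set es = E \<and>
     (\<forall>i<length es. signed_simplicial (E - set (take i es)) sg X Y (es ! i)))"

end

theory Submission
  imports Defs
begin

lemma edge_nbhd_sym: "edge_nbhd E u v = edge_nbhd E v u"
  unfolding edge_nbhd_def by auto

lemma mem_edge_nbhd:
  "w \<in> edge_nbhd G u v \<longleftrightarrow> ({u,w} \<in> G \<or> {v,w} \<in> G) \<and> w \<noteq> u \<and> w \<noteq> v"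
  unfolding edge_nbhd_def nbhd_def by auto

lemma simp_pair:
  "signed_simplicial G sg X Y {x,y} \<longleftrightarrow> {x,y} \<in> G \<and> is_biclique G X Y (edge_nbhd G x y)
     \<and> is_positive G sg (edge_nbhd G x y)"
  unfolding signed_simplicial_def by (auto simp: doubleton_eq_iff edge_nbhd_sym)

definition bip :: "'a set \<Rightarrow> 'a set \<Rightarrow> 'a set set \<Rightarrow> bool" where
  "bip X Y G \<longleftrightarrow> (\<forall>e\<in>G. \<exists>x\<in>X. \<exists>y\<in>Y. e = {x,y})"

lemma bip_edge: "bip X Y G \<Longrightarrow> e \<in> G \<Longrightarrow> \<exists>x y. e = {x,y} \<and> x \<in> X \<and> y \<in> Y"
  unfolding bip_def by blast

lemma bip_subset: "bip X Y G \<Longrightarrow> H \<subseteq> G \<Longrightarrow> bip X Y H"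
  unfolding bip_def by blast

lemma no_XX: "bip X Y G \<Longrightarrow> X \<inter> Y = {} \<Longrightarrow> {p,q} \<in> G \<Longrightarrow> p \<in> X \<Longrightarrow> q \<in> X \<Longrightarrow> False"
  unfolding bip_def by (fastforce simp: doubleton_eq_iff)

lemma no_YY: "bip X Y G \<Longrightarrow> X \<inter> Y = {} \<Longrightarrow> {p,q} \<in> G \<Longrightarrow> p \<in> Y \<Longrightarrow> q \<in> Y \<Longrightarrow> False"
  unfolding bip_def by (fastforce simp: doubleton_eq_iff)

definition PP :: "'a set set \<Rightarrow> ('a set \<Rightarrow> bool) \<Rightarrow> 'a set \<Rightarrow> 'a set \<Rightarrow> bool" where
  "PP G sg X Y \<longleftrightarrow> (\<forall>W. induced_edges G W \<noteq> {} \<longrightarrow>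
     (\<exists>e\<in>induced_edges G W. signed_simplicial (induced_edges G W) sg X Y e))"

lemma ie_ie: "induced_edges (induced_edges G W) W' = induced_edges G (W \<inter> W')"
  unfolding induced_edges_def by auto

lemma PP_ie: "PP G sg X Y \<Longrightarrow> PP (induced_edges G W) sg X Y"
  unfolding PP_def by (simp add: ie_ie)

lemma restrict_simp:
  assumes "signed_simplicial G sg X Y e" "e \<subseteq> W"
  shows "signed_simplicial (induced_edges G W) sg X Y e"
proof -
  obtain u v where e: "e = {u,v}" and bc: "is_biclique G X Y (edge_nbhd G u v)"
    and ps: "is_positive G sg (edge_nbhd G u v)" and eG: "e \<in> G"
    using assms(1) unfolding signed_simplicial_def by blast
  let ?H = "induced_edges G W"
  have sub: "edge_nbhd ?H u v \<subseteq> edge_nbhd G u v"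
    unfolding edge_nbhd_def nbhd_def induced_edges_def by auto
  have subW: "edge_nbhd ?H u v \<subseteq> W"
    unfolding edge_nbhd_def nbhd_def induced_edges_def by auto
  have "is_biclique ?H X Y (edge_nbhd ?H u v)"
    using bc sub subW unfolding is_biclique_def induced_edges_def by blast
  moreover have "is_positive ?H sg (edge_nbhd ?H u v)"
    using ps sub unfolding is_positive_def induced_edges_def by blast
  moreover have "e \<in> ?H" using eG assms(2) unfolding induced_edges_def by blast
  ultimately show ?thesis unfolding signed_simplicial_def using e by blast
qed

lemma chordal_PP:
  assumes "chordal_sb G sg X Y"
  shows "PP G sg X Y"
  unfolding PP_def
proof (intro allI impI)
  fix W assume ne: "induced_edges G W \<noteq> {}"
  obtain es where d: "distinct es" "set es = G"
    and o: "\<forall>i<length es. signed_simplicial (G - set (take i es)) sg X Y (es!i)"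
    using assms unfolding chordal_sb_def by blast
  define Q where "Q i \<longleftrightarrow> i < length es \<and> es!i \<subseteq> W" for i
  obtain e where "e \<in> G" "e \<subseteq> W" using ne unfolding induced_edges_def by blast
  then obtain i0 where "i0 < length es" "es!i0 = e" using d(2) by (metis in_set_conv_nth)
  then have "Q i0" using \<open>e \<subseteq> W\<close> unfolding Q_def by simp
  define i where "i = (LEAST i. Q i)"
  have Qi: "Q i" unfolding i_def using \<open>Q i0\<close> by (rule LeastI)
  have nQ: "\<not> Q j" if "j < i" for j using that unfolding i_def by (rule not_less_Least)
  have eq: "induced_edges (G - set (take i es)) W = induced_edges G W"
  proof -
    have "\<not> x \<subseteq> W" if "x \<in> set (take i es)" for x
    proof -
      from that obtain j where j: "j < length (take i es)" "take i es ! j = x"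
        by (metis in_set_conv_nth)
      then have "j < i" "j < length es" by auto
      then show ?thesis using nQ[of j] j unfolding Q_def by auto
    qed
    then show ?thesis unfolding induced_edges_def by auto
  qed
  have "signed_simplicial (G - set (take i es)) sg X Y (es!i)" using o Qi unfolding Q_def by blast
  then have "signed_simplicial (induced_edges G W) sg X Y (es!i)"
    using restrict_simp[of _ sg X Y "es!i" W] Qi eq unfolding Q_def by metis
  moreover have "es!i \<in> induced_edges G W" using Qi d(2) unfolding Q_def induced_edges_def by auto
  ultimately show "\<exists>e\<in>induced_edges G W. signed_simplicial (induced_edges G W) sg X Y e" by blast
qed

lemma chordal_insert:
  assumes "e \<in> G" "signed_simplicial G sg X Y e" "chordal_sb (G - {e}) sg X Y"
  shows "chordal_sb G sg X Y"
proof -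
  obtain es where d: "distinct es" "set es = G - {e}"
    and o: "\<forall>i<length es. signed_simplicial (G - {e} - set (take i es)) sg X Y (es!i)"
    using assms(3) unfolding chordal_sb_def by blast
  have "distinct (e#es)" "set (e#es) = G" using d assms(1) by auto
  moreover have "\<forall>i<length (e#es). signed_simplicial (G - set (take i (e#es))) sg X Y ((e#es)!i)"
  proof (intro allI impI)
    fix i assume "i < length (e#es)"
    show "signed_simplicial (G - set (take i (e#es))) sg X Y ((e#es)!i)"
    proof (cases i)
      case 0 then show ?thesis using assms(2) by simp
    next
      case (Suc j)
      then have "j < length es" using \<open>i < length (e#es)\<close> by simp
      moreover have "G - set (take i (e#es)) = G - {e} - set (take j es)" using Suc by auto
      ultimately show ?thesis using o Suc by simp
    qed
  qed
  ultimately show ?thesis unfolding chordal_sb_def by blast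
qed


definition Dom :: "'a set set \<Rightarrow> ('a set \<Rightarrow> bool) \<Rightarrow> 'a set \<Rightarrow> 'a \<Rightarrow> 'a set" where
  "Dom K sg Y v = {y \<in> Y. y \<noteq> v \<and> (\<forall>b\<in>nbhd K v. {b,y} \<in> K \<and> sg {b,y})}"

lemma twin_simp:
  assumes XY: "X \<inter> Y = {}" and bp: "bip X Y K"
    and g: "signed_simplicial K sg X Y {x0,a0}" and x0: "x0 \<in> X" and a0: "a0 \<in> Y"
    and aD: "a0 \<in> Dom K sg Y v" and xB: "x0 \<in> nbhd K v" and v: "v \<in> Y"
  shows "signed_simplicial K sg X Y {x0,v}"
proof -
  let ?S = "edge_nbhd K x0 v" and ?T = "edge_nbhd K x0 a0"
  have gK: "{x0,a0} \<in> K" and bcT: "is_biclique K X Y ?T" and psT: "is_positive K sg ?T"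
    using g by (auto simp: simp_pair)
  have av: "a0 \<noteq> v" and dom: "\<And>b. b \<in> nbhd K v \<Longrightarrow> {b,a0} \<in> K \<and> sg {b,a0}"
    using aD unfolding Dom_def by auto
  have Sx: "x \<in> nbhd K v \<and> x \<noteq> x0 \<and> x \<in> ?T" if "x \<in> ?S" "x \<in> X" for x
  proof -
    have "{x0,x} \<notin> K" using no_XX[OF bp XY] x0 that(2) by blast
    then have "{v,x} \<in> K" "x \<noteq> x0" "x \<noteq> v" using that(1) by (auto simp: mem_edge_nbhd)
    then have xb: "x \<in> nbhd K v" by (simp add: nbhd_def)
    then have "{x,a0} \<in> K" using dom by blast
    moreover have "x \<noteq> a0" using that(2) a0 XY by auto
    ultimately show ?thesis using xb \<open>x \<noteq> x0\<close> by (auto simp: mem_edge_nbhd insert_commute)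
  qed
  have Sy: "y = a0 \<or> y \<in> ?T" if "y \<in> ?S" "y \<in> Y" for y
  proof -
    have "{v,y} \<notin> K" using no_YY[OF bp XY] v that(2) by blast
    then have "{x0,y} \<in> K" "y \<noteq> x0" using that(1) by (auto simp: mem_edge_nbhd)
    then show ?thesis by (auto simp: mem_edge_nbhd)
  qed
  have "is_biclique K X Y ?S"
    unfolding is_biclique_def
  proof (intro ballI)
    fix x y assume x: "x \<in> ?S \<inter> X" and y: "y \<in> ?S \<inter> Y"
    from Sx x have xT: "x \<in> nbhd K v" "x \<in> ?T" by auto
    from Sy y consider "y = a0" | "y \<in> ?T" by blast
    then show "{x,y} \<in> K"
    proof cases
      case 1 then show ?thesis using dom xT by blast
    next
      case 2 then show ?thesis using bcT xT x y unfolding is_biclique_def by blast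
    qed
  qed
  moreover have "is_positive K sg ?S"
    unfolding is_positive_def
  proof
    fix e assume e: "e \<in> induced_edges K ?S"
    then have eK: "e \<in> K" and eS: "e \<subseteq> ?S" unfolding induced_edges_def by auto
    obtain p q where pq: "e = {p,q}" "p \<in> X" "q \<in> Y" using bip_edge[OF bp eK] by blast
    have pS: "p \<in> ?S" and qS: "q \<in> ?S" using eS pq by auto
    from Sx[OF pS pq(2)] have pT: "p \<in> nbhd K v" "p \<in> ?T" by auto
    from Sy[OF qS pq(3)] consider "q = a0" | "q \<in> ?T" by blast
    then show "sg e"
    proof cases
      case 1 then show ?thesis using dom pT pq by blast
    next
      case 2
      then have "e \<in> induced_edges K ?T" using pT eK pq unfolding induced_edges_def by auto
      then show ?thesis using psT unfolding is_positive_def by blast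
    qed
  qed
  moreover have "{x0,v} \<in> K" using xB by (simp add: nbhd_def insert_commute)
  ultimately show ?thesis by (simp add: simp_pair)
qed


lemma U_strong:
  assumes XY: "X \<inter> Y = {}" and v: "v \<in> Y"
  shows "distinct es \<Longrightarrow> set es = K \<Longrightarrow>
    (\<forall>i<length es. signed_simplicial (K - set (take i es)) sg X Y (es!i)) \<Longrightarrow>
    bip X Y K \<Longrightarrow> nbhd K v \<noteq> {} \<Longrightarrow>
    \<exists>x y. x \<in> X \<and> y \<in> Y \<and> y \<notin> Dom K sg Y v \<and> signed_simplicial K sg X Y {x,y}"
proof (induction es arbitrary: K)
  case Nil
  then show ?case by (simp add: nbhd_def)
next
  case (Cons g es)
  let ?K' = "set es"
  have gn: "g \<notin> ?K'" and dK': "distinct es" using Cons.prems(1) by auto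
  have Keq: "K = insert g ?K'" using Cons.prems(2) by auto
  have gs: "signed_simplicial K sg X Y g" using Cons.prems(3) by auto
  have o': "\<forall>i<length es. signed_simplicial (?K' - set (take i es)) sg X Y (es!i)"
  proof (intro allI impI)
    fix i assume "i < length es"
    then have "signed_simplicial (K - set (take (Suc i) (g#es))) sg X Y ((g#es)!(Suc i))"
      using Cons.prems(3) by auto
    moreover have "K - set (take (Suc i) (g#es)) = ?K' - set (take i es)" using Keq gn by auto
    ultimately show "signed_simplicial (?K' - set (take i es)) sg X Y (es!i)" by simp
  qed
  have bp: "bip X Y K" by fact
  have bp': "bip X Y ?K'" using bip_subset[OF bp] Keq by blast
  obtain x0 a0 where g: "g = {x0,a0}" and x0: "x0 \<in> X" and a0: "a0 \<in> Y"
    using bip_edge[OF bp] Keq by blast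
  show ?case
  proof (cases "a0 \<in> Dom K sg Y v")
    case False
    then show ?thesis using gs g x0 a0 by blast
  next
    case aD: True
    show ?thesis
    proof (cases "x0 \<in> nbhd K v")
      case True
      have "signed_simplicial K sg X Y {x0,v}"
        using twin_simp[OF XY bp gs[unfolded g] x0 a0 aD True v] .
      moreover have "v \<notin> Dom K sg Y v" unfolding Dom_def by auto
      ultimately show ?thesis using x0 v by blast
    next
      case xnB: False
      have av: "a0 \<noteq> v" using aD unfolding Dom_def by auto
      have nb: "nbhd ?K' v = nbhd K v"
      proof -
        have "{v,w} \<noteq> g" for w using g av xnB x0 v XY by (auto simp: doubleton_eq_iff)
        then show ?thesis unfolding nbhd_def using Keq by auto
      qed
      have Deq: "Dom ?K' sg Y v = Dom K sg Y v"
      proof -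
        have "{b,y} \<noteq> g" if "b \<in> nbhd K v" for b y
          using that g xnB a0 XY bip_edge[OF bp] no_YY[OF bp XY] v
          by (auto simp: doubleton_eq_iff nbhd_def insert_commute)
        then show ?thesis unfolding Dom_def nb using Keq by auto
      qed
      have "nbhd ?K' v \<noteq> {}" using nb Cons.prems(5) by simp
      then obtain x1 y1 where x1: "x1 \<in> X" and y1: "y1 \<in> Y" and y1D: "y1 \<notin> Dom K sg Y v"
        and hs: "signed_simplicial ?K' sg X Y {x1,y1}"
        using Cons.IH[OF dK' refl o' bp'] Deq by auto
      have hK': "{x1,y1} \<in> ?K'" and bch: "is_biclique ?K' X Y (edge_nbhd ?K' x1 y1)"
        and psh: "is_positive ?K' sg (edge_nbhd ?K' x1 y1)" using hs by (auto simp: simp_pair)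
      have ya: "y1 \<noteq> a0" using y1D aD by auto
      show ?thesis
      proof (cases "x1 = x0")
        case True
        have y1v: "y1 \<noteq> v"
        proof
          assume "y1 = v"
          then have "{v,x0} \<in> K" using hK' True Keq by (auto simp: insert_commute)
          then show False using xnB by (simp add: nbhd_def)
        qed
        have "\<forall>b\<in>nbhd K v. {b,y1} \<in> K \<and> sg {b,y1}"
        proof
          fix b assume b: "b \<in> nbhd K v"
          have bX: "b \<in> X"
            using b bip_edge[OF bp] v XY unfolding nbhd_def by (fastforce simp: doubleton_eq_iff)
          have ba: "{b,a0} \<in> K" using aD b unfolding Dom_def by auto
          have "b \<noteq> x0" using b xnB by auto
          moreover have "b \<noteq> a0" using bX a0 XY by auto
          ultimately have bT: "b \<in> edge_nbhd K x0 a0" using ba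
            by (auto simp: mem_edge_nbhd insert_commute)
          have "{x0,y1} \<in> K" using hK' True Keq by auto
          moreover have "y1 \<noteq> x0" using y1 x0 XY by auto
          ultimately have yT: "y1 \<in> edge_nbhd K x0 a0" using ya by (auto simp: mem_edge_nbhd)
          have bc: "is_biclique K X Y (edge_nbhd K x0 a0)" and ps: "is_positive K sg (edge_nbhd K x0 a0)"
            using gs g by (auto simp: simp_pair)
          have "{b,y1} \<in> K" using bc bT yT bX y1 unfolding is_biclique_def by blast
          moreover then have "sg {b,y1}" using ps bT yT unfolding is_positive_def induced_edges_def by blast
          ultimately show "{b,y1} \<in> K \<and> sg {b,y1}" by blast
        qed
        then have "y1 \<in> Dom K sg Y v" using y1 y1v unfolding Dom_def by blast
        then show ?thesis using y1D by blast
      next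
        case x10: False
        have nx: "nbhd K x1 = nbhd ?K' x1"
        proof -
          have "{x1,w} \<noteq> g" for w using g x10 x1 a0 XY by (auto simp: doubleton_eq_iff)
          then show ?thesis unfolding nbhd_def using Keq by auto
        qed
        have ny: "nbhd K y1 = nbhd ?K' y1"
        proof -
          have "{y1,w} \<noteq> g" for w using g ya y1 x0 XY by (auto simp: doubleton_eq_iff)
          then show ?thesis unfolding nbhd_def using Keq by auto
        qed
        have Seq: "edge_nbhd K x1 y1 = edge_nbhd ?K' x1 y1"
          unfolding edge_nbhd_def nx ny ..
        have "is_biclique K X Y (edge_nbhd K x1 y1)"
          using bch Seq Keq unfolding is_biclique_def by auto
        moreover have "is_positive K sg (edge_nbhd K x1 y1)"
          unfolding is_positive_def
        proof
          fix e assume e: "e \<in> induced_edges K (edge_nbhd K x1 y1)"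
          show "sg e"
          proof (cases "e = g")
            case True
            then have "x0 \<in> edge_nbhd ?K' x1 y1" "a0 \<in> edge_nbhd ?K' x1 y1"
              using e g Seq unfolding induced_edges_def by auto
            then have "{x0,a0} \<in> ?K'" using bch x0 a0 unfolding is_biclique_def by blast
            then show ?thesis using gn g by simp
          next
            case False
            then have "e \<in> induced_edges ?K' (edge_nbhd ?K' x1 y1)"
              using e Seq Keq unfolding induced_edges_def by auto
            then show ?thesis using psh unfolding is_positive_def by blast
          qed
        qed
        moreover have "{x1,y1} \<in> K" using hK' Keq by auto
        ultimately show ?thesis using x1 y1 y1D by (auto simp: simp_pair)
      qed
    qed
  qed
qed


lemma lift_simp:
  assumes KG: "K \<subseteq> G'" and out: "\<forall>e\<in>G' - K. u \<in> e"
    and hs: "signed_simplicial K sg X Y {x,y}" and ux: "u \<noteq> x" and uy: "u \<noteq> y"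
    and nx: "{u,x} \<notin> G'" and ny: "{u,y} \<notin> G'"
  shows "signed_simplicial G' sg X Y {x,y}"
proof -
  have hK: "{x,y} \<in> K" and bc: "is_biclique K X Y (edge_nbhd K x y)"
    and ps: "is_positive K sg (edge_nbhd K x y)" using hs by (auto simp: simp_pair)
  have n1: "nbhd G' x = nbhd K x"
  proof -
    have "{x,w} \<in> K" if "{x,w} \<in> G'" for w
    proof (rule ccontr)
      assume "{x,w} \<notin> K"
      then have "{x,w} \<in> G' - K" using that by simp
      then have "u \<in> {x,w}" by (rule bspec[OF out])
      then have "w = u" using ux by auto
      then show False using nx that by (simp add: insert_commute)
    qed
    then show ?thesis using KG unfolding nbhd_def by auto
  qed
  have n2: "nbhd G' y = nbhd K y"
  proof -
    have "{y,w} \<in> K" if "{y,w} \<in> G'" for w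
    proof (rule ccontr)
      assume "{y,w} \<notin> K"
      then have "{y,w} \<in> G' - K" using that by simp
      then have "u \<in> {y,w}" by (rule bspec[OF out])
      then have "w = u" using uy by auto
      then show False using ny that by (simp add: insert_commute)
    qed
    then show ?thesis using KG unfolding nbhd_def by auto
  qed
  have Seq: "edge_nbhd G' x y = edge_nbhd K x y" unfolding edge_nbhd_def n1 n2 ..
  have uS: "u \<notin> edge_nbhd K x y"
  proof
    assume "u \<in> edge_nbhd K x y"
    then have "{x,u} \<in> K \<or> {y,u} \<in> K" by (simp add: mem_edge_nbhd)
    then have "{u,x} \<in> G' \<or> {u,y} \<in> G'" using KG by (auto simp: insert_commute)
    then show False using nx ny by blast
  qed
  have "is_biclique G' X Y (edge_nbhd G' x y)" using bc Seq KG unfolding is_biclique_def by auto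
  moreover have "is_positive G' sg (edge_nbhd G' x y)"
    unfolding is_positive_def
  proof
    fix e assume e: "e \<in> induced_edges G' (edge_nbhd G' x y)"
    then have "u \<notin> e" using uS Seq unfolding induced_edges_def by auto
    then have "e \<in> K" using e out unfolding induced_edges_def by auto
    then have "e \<in> induced_edges K (edge_nbhd K x y)" using e Seq unfolding induced_edges_def by auto
    then show "sg e" using ps unfolding is_positive_def by blast
  qed
  moreover have "{x,y} \<in> G'" using hK KG by auto
  ultimately show ?thesis by (simp add: simp_pair)
qed

lemma lemT:
  assumes XY: "X \<inter> Y = {}" and bp: "bip X Y G" and P: "PP G sg X Y"
    and IH: "\<And>H. H \<subset> G \<Longrightarrow> PP H sg X Y \<Longrightarrow> chordal_sb H sg X Y"
    and u: "u \<in> X" and v: "v \<in> Y" and es: "signed_simplicial G sg X Y {u,v}"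
    and ne: "G - {{u,v}} \<noteq> {}"
  shows "\<exists>g\<in>G - {{u,v}}. signed_simplicial (G - {{u,v}}) sg X Y g"
proof -
  have eG: "{u,v} \<in> G" and bce: "is_biclique G X Y (edge_nbhd G u v)"
    and pse: "is_positive G sg (edge_nbhd G u v)" using es by (auto simp: simp_pair)
  have uv: "u \<noteq> v" using u v XY by auto
  have nbX: "w \<in> X" if "w \<in> nbhd G v" for w
    using that bip_edge[OF bp] v XY unfolding nbhd_def by (fastforce simp: doubleton_eq_iff)
  show ?thesis
  proof (cases "nbhd G v - {u} = {}")
    case True
    have "induced_edges G (- {v}) = G - {{u,v}}"
    proof -
      have "e = {u,v}" if eG': "e \<in> G" and ve: "v \<in> e" for e
      proof -
        obtain p q where pq: "e = {p,q}" "p \<in> X" "q \<in> Y" using bip_edge[OF bp eG'] by blast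
        then have "v = q" using ve v XY by auto
        then have "p \<in> nbhd G v" using pq eG' by (simp add: nbhd_def insert_commute)
        then have "p = u" using True by auto
        then show ?thesis using pq \<open>v = q\<close> by simp
      qed
      then show ?thesis unfolding induced_edges_def by auto
    qed
    then show ?thesis using P ne unfolding PP_def by metis
  next
    case False
    define K where "K = induced_edges G (- {u})"
    have KG: "K \<subset> G" using eG unfolding K_def induced_edges_def by auto
    have "PP K sg X Y" unfolding K_def using PP_ie[OF P] .
    then have "chordal_sb K sg X Y" using IH KG by blast
    then obtain es where d: "distinct es" "set es = K"
      and o: "\<forall>i<length es. signed_simplicial (K - set (take i es)) sg X Y (es!i)"
      unfolding chordal_sb_def by blast
    have bpK: "bip X Y K" using bip_subset[OF bp] KG by blast
    have nbK: "nbhd K v = nbhd G v - {u}"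
      unfolding K_def nbhd_def induced_edges_def using uv by auto
    then have "nbhd K v \<noteq> {}" using False by simp
    then obtain x y where x: "x \<in> X" and y: "y \<in> Y" and yD: "y \<notin> Dom K sg Y v"
      and hs: "signed_simplicial K sg X Y {x,y}"
      using U_strong[OF XY v d o bpK] by blast
    have hK: "{x,y} \<in> K" using hs by (simp add: simp_pair)
    have ux: "u \<noteq> x" and uy: "u \<noteq> y" using hK unfolding K_def induced_edges_def by auto
    have K_sub: "K \<subseteq> G - {{u,v}}" using eG unfolding K_def induced_edges_def by auto
    have out: "\<forall>e\<in>(G - {{u,v}}) - K. u \<in> e" unfolding K_def induced_edges_def by auto
    have nx: "{u,x} \<notin> G - {{u,v}}" using no_XX[OF bp XY _ u x] by blast
    have ny: "{u,y} \<notin> G - {{u,v}}"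
    proof
      assume a: "{u,y} \<in> G - {{u,v}}"
      then have yv: "y \<noteq> v" by auto
      have yN: "y \<in> edge_nbhd G u v" using a uy yv by (auto simp: mem_edge_nbhd)
      have "\<forall>b\<in>nbhd K v. {b,y} \<in> K \<and> sg {b,y}"
      proof
        fix b assume b: "b \<in> nbhd K v"
        then have bG: "b \<in> nbhd G v" "b \<noteq> u" using nbK by auto
        have bX: "b \<in> X" using nbX bG by blast
        have "b \<noteq> v" using bX v XY by auto
        then have bN: "b \<in> edge_nbhd G u v" using bG by (auto simp: mem_edge_nbhd nbhd_def)
        have "{b,y} \<in> G" using bce bN yN bX y unfolding is_biclique_def by blast
        moreover then have "sg {b,y}" using pse bN yN unfolding is_positive_def induced_edges_def by blast
        moreover have "{b,y} \<in> K" using \<open>{b,y} \<in> G\<close> bG uy unfolding K_def induced_edges_def by auto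
        ultimately show "{b,y} \<in> K \<and> sg {b,y}" by blast
      qed
      then have "y \<in> Dom K sg Y v" using y yv unfolding Dom_def by blast
      then show False using yD by blast
    qed
    have "signed_simplicial (G - {{u,v}}) sg X Y {x,y}"
      using lift_simp[OF K_sub out hs ux uy nx ny] .
    moreover have "{x,y} \<in> G - {{u,v}}" using hK K_sub by auto
    ultimately show ?thesis by blast
  qed
qed


lemma main_ind:
  assumes XY: "X \<inter> Y = {}"
  shows "finite G \<Longrightarrow> bip X Y G \<Longrightarrow> PP G sg X Y \<Longrightarrow> chordal_sb G sg X Y"
proof (induction G rule: finite_psubset_induct)
  case (psubset G)
  show ?case
  proof (cases "G = {}")
    case True
    then show ?thesis unfolding chordal_sb_def by (intro exI[of _ "[]"]) simp
  next
    case False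
    have IE_U: "induced_edges G UNIV = G" unfolding induced_edges_def by auto
    obtain e where eG: "e \<in> G" and es: "signed_simplicial G sg X Y e"
      using psubset.prems(2) False unfolding PP_def by (metis IE_U)
    obtain u v where e: "e = {u,v}" and u: "u \<in> X" and v: "v \<in> Y"
      using bip_edge[OF psubset.prems(1) eG] by blast
    have "PP (G - {e}) sg X Y"
      unfolding PP_def
    proof (intro allI impI)
      fix W assume ne: "induced_edges (G - {e}) W \<noteq> {}"
      show "\<exists>g\<in>induced_edges (G - {e}) W. signed_simplicial (induced_edges (G - {e}) W) sg X Y g"
      proof (cases "e \<subseteq> W")
        case False
        then have "induced_edges (G - {e}) W = induced_edges G W" unfolding induced_edges_def by auto
        then show ?thesis using psubset.prems(2) ne unfolding PP_def by metis
      next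
        case True
        define Gw where "Gw = induced_edges G W"
        have GwG: "Gw \<subseteq> G" unfolding Gw_def induced_edges_def by auto
        have eq: "induced_edges (G - {e}) W = Gw - {{u,v}}"
          unfolding Gw_def induced_edges_def using e by auto
        have bpw: "bip X Y Gw" using bip_subset[OF psubset.prems(1) GwG] .
        have Pw: "PP Gw sg X Y" unfolding Gw_def using PP_ie[OF psubset.prems(2)] .
        have sw: "signed_simplicial Gw sg X Y {u,v}"
          unfolding Gw_def using restrict_simp[OF es True] e by simp
        have IHw: "chordal_sb H sg X Y" if "H \<subset> Gw" "PP H sg X Y" for H
          using psubset.IH[of H] that GwG bip_subset[OF psubset.prems(1), of H] by auto
        show ?thesis
          using lemT[OF XY bpw Pw IHw u v sw] ne eq by auto
      qed
    qed
    moreover have "G - {e} \<subset> G" using eG by auto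
    moreover have "bip X Y (G - {e})" using bip_subset[OF psubset.prems(1)] by blast
    ultimately have "chordal_sb (G - {e}) sg X Y" using psubset.IH by blast
    then show ?thesis using chordal_insert[OF eG es] by blast
  qed
qed

lemma conv_simp:
  assumes "\<forall>e\<in>G. e \<subseteq> W"
  shows "signed_simplicial G sg (X \<inter> W) (Y \<inter> W) e \<longleftrightarrow> signed_simplicial G sg X Y e"
proof -
  have sub: "edge_nbhd G u v \<subseteq> W" for u v
    using assms unfolding edge_nbhd_def nbhd_def by auto
  have "is_biclique G (X \<inter> W) (Y \<inter> W) (edge_nbhd G u v) \<longleftrightarrow> is_biclique G X Y (edge_nbhd G u v)" for u v
    using sub[of u v] unfolding is_biclique_def by blast
  then show ?thesis unfolding signed_simplicial_def by simp
qed

theorem corollary5p2: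
  fixes V X Y :: "'a set" and E :: "'a set set" and sg :: "'a set \<Rightarrow> bool"
  assumes "signed_bigraph V E X Y"
  shows "\<not> chordal_sb E sg X Y \<longleftrightarrow>
    (\<exists>W\<subseteq>V. induced_edges E W \<noteq> {} \<and>
       \<not> (\<exists>e\<in>induced_edges E W.
             signed_simplicial (induced_edges E W) sg (X \<inter> W) (Y \<inter> W) e))"
proof -
  have fV: "finite V" and XYV: "X \<union> Y = V" and XY: "X \<inter> Y = {}"
    and ed: "\<forall>e\<in>E. \<exists>x\<in>X. \<exists>y\<in>Y. e = {x, y}"
    using assms unfolding signed_bigraph_def by auto
  have bp: "bip X Y E" using ed unfolding bip_def .
  have EV: "E \<subseteq> Pow V" using ed XYV by auto
  have fE: "finite E" using finite_subset[OF EV] fV by auto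
  have ieV: "induced_edges E W = induced_edges E (W \<inter> V)" for W
    using EV unfolding induced_edges_def by auto
  have cv: "signed_simplicial (induced_edges E W) sg (X \<inter> W) (Y \<inter> W) e
      \<longleftrightarrow> signed_simplicial (induced_edges E W) sg X Y e" for W e
    by (rule conv_simp) (auto simp: induced_edges_def)
  have "chordal_sb E sg X Y \<longleftrightarrow> PP E sg X Y"
    using chordal_PP main_ind[OF XY fE bp] by blast
  moreover have "PP E sg X Y \<longleftrightarrow> (\<forall>W\<subseteq>V. induced_edges E W \<noteq> {} \<longrightarrow>
       (\<exists>e\<in>induced_edges E W. signed_simplicial (induced_edges E W) sg (X \<inter> W) (Y \<inter> W) e))"
  proof
    assume "PP E sg X Y"
    then show "\<forall>W\<subseteq>V. induced_edges E W \<noteq> {} \<longrightarrow>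
       (\<exists>e\<in>induced_edges E W. signed_simplicial (induced_edges E W) sg (X \<inter> W) (Y \<inter> W) e)"
      unfolding PP_def cv by blast
  next
    assume R: "\<forall>W\<subseteq>V. induced_edges E W \<noteq> {} \<longrightarrow>
       (\<exists>e\<in>induced_edges E W. signed_simplicial (induced_edges E W) sg (X \<inter> W) (Y \<inter> W) e)"
    show "PP E sg X Y"
      unfolding PP_def
    proof (intro allI impI)
      fix W assume "induced_edges E W \<noteq> {}"
      then have "induced_edges E (W \<inter> V) \<noteq> {}" using ieV by simp
      then have "\<exists>e\<in>induced_edges E (W \<inter> V). signed_simplicial (induced_edges E (W \<inter> V)) sg X Y e"
        using R[rule_format, of "W \<inter> V"] cv by blast
      then show "\<exists>e\<in>induced_edges E W. signed_simplicial (induced_edges E W) sg X Y e"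
        using ieV[of W] by simp
    qed
  qed
  ultimately show ?thesis by blast
qed

end
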